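(* Let $\Delta$ be a region of $\mathcal{C}_{n,A}$ ($n\ge1$) and let $D_1(\Delta)$ be the Dyck path defined below. Then $\mathrm{level}(\Delta)=\ell(D_1(\Delta))$. Equivalently, for any $\bm x\in\Delta$ with $x_{\pi(1)}>\dots>x_{\pi(n)}$, $\mathrm{level}(\Delta)=1+\#\{k\in[n-1]: x_{\pi(k)}-x_{\pi(k+1)}>a_1\}$.
   Context: Let $A=\{a_1,\dots,a_m\}$ with $a_1>\dots>a_m>0$; $\mathcal{C}_{n,A}$ is the arrangement in $\mathbb{R}^n$ of hyperplanes $x_i-x_j=0$ ($i<j$) and $x_i-x_j=a_k$ ($i\ne j$, $1\le k\le m$); regions are connected components of the complement. The level of $X\subseteq\mathbb{R}^n$ is the smallest integer $\ell\ge0$ such that there are a linear subspace $W$ of dimension $\ell$ and $r>0$ with $X\subseteq\{\bm x:\min_{\bm y\in W}\|\bm x-\bm y\|\le r\}$. For a region $\Delta$, pick $\bm x\in\Delta$ and $\pi\in\mathfrak{S}_n$ with $x_{\pi(1)}>\dots>x_{\pi(n)}$, and let $\alpha_i=\#\{j\in[n]:x_{\pi(i)}-x_{\pi(j)}>a_1\}$ (number of $+$ entries in row $i$ of the sign matrix $(\operatorname{sgn}(x_{\pi(i)}-x_{\pi(j)}-a_1))_{i,j}$); then $\alpha_1\ge\dots\ge\alpha_n=0$ and $\alpha_i\le n-i$, and these numbers do not depend on the choice of $\bm x\in\Delta$. $D_1(\Delta)$ is the lattice path from $(0,n)$ to $(n,0)$ with steps $E=(1,0)$, $S=(0,-1)$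 given by $E^{n-\alpha_1}SE^{\alpha_1-\alpha_2}S\cdots E^{\alpha_{n-1}-\alpha_n}S$; it is a Dyck path (stays weakly above the line $y=n-x$). For a Dyck path $D$ from $(0,n)$ to $(n,0)$, $\ell(D)$ is its number of prime components, i.e. the number of $k\in\{1,\dots,n\}$ such that $D$ passes through the point $(k,n-k)$. *)

theory Defs
  imports "HOL-Analysis.Analysis"
begin

text \<open>Points of R^n are vectors of type real^'n with n = CARD('n).
  The hyperplanes x_i - x_j = 0 (i<j) are the same as x_i - x_j = 0 for i \<noteq> j,
  so no ordering of the index type is needed.\<close>

definition arr_hyperplanes :: "real set \<Rightarrow> (real^'n) set set" where
  "arr_hyperplanes A =
     {{x. x$i - x$j = 0} | i j. i \<noteq> j} \<union>
     {{x. x$i - x$j = a} | i j a. i \<noteq> j \<and> a \<in> A}"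

definition arr_complement :: "real set \<Rightarrow> (real^'n) set" where
  "arr_complement A = UNIV - \<Union>(arr_hyperplanes A)"

definition arr_regions :: "real set \<Rightarrow> (real^'n) set set" where
  "arr_regions A = components (arr_complement A)"

definition level :: "(real^'n) set \<Rightarrow> nat" where
  "level X = (LEAST l. \<exists>W r. subspace W \<and> dim W = l \<and> r > 0 \<and>
                            (\<forall>x\<in>X. infdist x W \<le> r))"

text \<open>The lattice path E^{n-\<alpha>_1} S E^{\<alpha>_1-\<alpha>_2} S ... E^{\<alpha>_{n-1}-\<alpha>_n} S,
  as a list of steps (True = E = (1,0), False = S = (0,-1)), with \<alpha>_0 := n.\<close>
definition path_steps :: "nat \<Rightarrow> (nat \<Rightarrow> nat) \<Rightarrow> bool list" where
  "path_steps n \<alpha> =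
     concat (map (\<lambda>i. replicate ((if i = 1 then n else \<alpha> (i - 1)) - \<alpha> i) True @ [False])
                 [1..<n+1])"

definition step_vec :: "bool \<Rightarrow> int \<times> int" where
  "step_vec s = (if s then (1, 0) else (0, -1))"

fun path_points :: "int \<times> int \<Rightarrow> bool list \<Rightarrow> (int \<times> int) list" where
  "path_points p [] = [p]"
| "path_points p (s # ss) = p # path_points (fst p + fst (step_vec s), snd p + snd (step_vec s)) ss"

definition D1_path :: "nat \<Rightarrow> (nat \<Rightarrow> nat) \<Rightarrow> (int \<times> int) list" where
  "D1_path n \<alpha> = path_points (0, int n) (path_steps n \<alpha>)"

definition prime_components :: "nat \<Rightarrow> (int \<times> int) list \<Rightarrow> nat" where
  "prime_components n D = card {k \<in> {1..n}. (int k, int n - int k) \<in> set D}"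

definition alpha_seq :: "real \<Rightarrow> nat \<Rightarrow> (nat \<Rightarrow> 'n) \<Rightarrow> real^'n \<Rightarrow> nat \<Rightarrow> nat" where
  "alpha_seq a1 n \<pi> x i = card {j \<in> {1..n}. x$(\<pi> i) - x$(\<pi> j) > a1}"

end

theory Submission
  imports Defs
begin


lemma pp_rep: "set (path_points p (replicate m True @ ys)) =
   {(fst p + int t, snd p) | t. t < m} \<union> set (path_points (fst p + int m, snd p) ys)"
proof (induction m arbitrary: p)
  case 0 then show ?case by simp
next
  case (Suc m)
  have e: "{(fst p + int t, snd p) | t. t < Suc m} = insert p {(fst p + 1 + int t, snd p) | t. t < m}"
  proof (rule set_eqI, rule iffI)
    fix z assume "z \<in> {(fst p + int t, snd p) | t. t < Suc m}"
    then obtain t where t: "t < Suc m" "z = (fst p + int t, snd p)" by blast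
    show "z \<in> insert p {(fst p + 1 + int t, snd p) | t. t < m}"
    proof (cases t)
      case 0 then show ?thesis using t by simp
    next
      case (Suc t') then show ?thesis using t by auto
    qed
  next
    fix z assume "z \<in> insert p {(fst p + 1 + int t, snd p) | t. t < m}"
    then show "z \<in> {(fst p + int t, snd p) | t. t < Suc m}"
      apply auto
      apply (rule exI[of _ 0], simp)
      apply (rule_tac x="Suc t" in exI, simp)
      done
  qed
  show ?case using Suc[of "(fst p + 1, snd p)"]
    by (simp add: step_vec_def e add.assoc)
qed

definition gfun :: "nat \<Rightarrow> (nat \<Rightarrow> nat) \<Rightarrow> nat \<Rightarrow> nat" where
  "gfun n \<alpha> i = (if i = 1 then n else \<alpha> (i - 1))"

lemma rows:
  fixes n :: nat and \<alpha> :: "nat \<Rightarrow> nat"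
  assumes mono: "\<forall>i. 1 \<le> i \<longrightarrow> i < n \<longrightarrow> \<alpha> (i+1) \<le> \<alpha> i" and a1: "\<alpha> 1 \<le> n" and n1: "1 \<le> n"
  shows "1 \<le> s \<Longrightarrow> s \<le> n+1 \<Longrightarrow>
    set (path_points (int n - int (gfun n \<alpha> s), int n - int s + 1)
        (concat (map (\<lambda>i. replicate (gfun n \<alpha> i - \<alpha> i) True @ [False]) [s..<n+1])))
    = (\<Union>i\<in>{s..n}. {(int n - int (gfun n \<alpha> i) + int t, int n - int i + 1) | t. t \<le> gfun n \<alpha> i - \<alpha> i})
      \<union> {(int n - int (\<alpha> n), 0)}"
proof (induction "n + 1 - s" arbitrary: s)
  case 0
  then have "s = n + 1" by simp
  then show ?case using n1 by (simp add: gfun_def)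
next
  case (Suc d)
  then have sn: "s \<le> n" and s1: "1 \<le> s" by auto
  have IH: "set (path_points (int n - int (gfun n \<alpha> (s+1)), int n - int (s+1) + 1)
        (concat (map (\<lambda>i. replicate (gfun n \<alpha> i - \<alpha> i) True @ [False]) [s+1..<n+1])))
    = (\<Union>i\<in>{s+1..n}. {(int n - int (gfun n \<alpha> i) + int t, int n - int i + 1) | t. t \<le> gfun n \<alpha> i - \<alpha> i})
      \<union> {(int n - int (\<alpha> n), 0)}"
    by (rule Suc.hyps(1)) (use Suc.hyps(2) sn in auto)
  have le: "\<alpha> s \<le> gfun n \<alpha> s"
  proof (cases "s = 1")
    case True then show ?thesis using a1 by (simp add: gfun_def)
  next
    case False then show ?thesis using mono[rule_format, of "s-1"] sn s1 by (simp add: gfun_def)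
  qed
  have gs1: "gfun n \<alpha> (s+1) = \<alpha> s" using s1 by (simp add: gfun_def)
  have ups: "[s..<n+1] = s # [s+1..<n+1]" using sn by (simp add: upt_conv_Cons)
  define p where "p = (int n - int (gfun n \<alpha> s), int n - int s + 1)"
  define m where "m = gfun n \<alpha> s - \<alpha> s"
  have pm: "(fst p + int m, snd p - 1) = (int n - int (gfun n \<alpha> (s+1)), int n - int (s+1) + 1)"
    using le gs1 by (simp add: p_def m_def)
  have "set (path_points p (concat (map (\<lambda>i. replicate (gfun n \<alpha> i - \<alpha> i) True @ [False]) [s..<n+1])))
     = {(fst p + int t, snd p) | t. t < m} \<union> ({(fst p + int m, snd p)} \<union>
       set (path_points (fst p + int m, snd p - 1) (concat (map (\<lambda>i. replicate (gfun n \<alpha> i - \<alpha> i) True @ [False]) [s+1..<n+1]))))"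
    unfolding ups by (simp add: pp_rep m_def step_vec_def)
  also have "\<dots> = {(fst p + int t, snd p) | t. t \<le> m} \<union> 
       set (path_points (fst p + int m, snd p - 1) (concat (map (\<lambda>i. replicate (gfun n \<alpha> i - \<alpha> i) True @ [False]) [s+1..<n+1])))"
    by (auto simp: le_less)
  also have "\<dots> = (\<Union>i\<in>{s..n}. {(int n - int (gfun n \<alpha> i) + int t, int n - int i + 1) | t. t \<le> gfun n \<alpha> i - \<alpha> i})
      \<union> {(int n - int (\<alpha> n), 0)}"
    unfolding pm IH using sn
    apply (simp add: p_def m_def)
    apply (subst (2) atLeastAtMost_insertL[symmetric])
    by auto
  finally show ?case by (simp add: p_def)
qed

lemma D1_count:
  fixes n :: nat and \<alpha> :: "nat \<Rightarrow> nat"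
  assumes n1: "1 \<le> n" and bound: "\<forall>i\<in>{1..n}. \<alpha> i \<le> n - i"
    and mono: "\<forall>i. 1 \<le> i \<longrightarrow> i < n \<longrightarrow> \<alpha> (i+1) \<le> \<alpha> i"
  shows "prime_components n (D1_path n \<alpha>) = card {k\<in>{1..n}. \<alpha> k = n - k}"
proof -
  have a1: "\<alpha> 1 \<le> n" using bound n1 by (metis atLeastAtMost_iff diff_le_self le_trans order_refl)
  have D: "D1_path n \<alpha> = path_points (int n - int (gfun n \<alpha> 1), int n - int 1 + 1)
        (concat (map (\<lambda>i. replicate (gfun n \<alpha> i - \<alpha> i) True @ [False]) [1..<n+1]))"
    unfolding D1_path_def path_steps_def gfun_def by simp
  have S: "set (D1_path n \<alpha>) = (\<Union>i\<in>{1..n}. {(int n - int (gfun n \<alpha> i) + int t, int n - int i + 1) | t. t \<le> gfun n \<alpha> i - \<alpha> i})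
      \<union> {(int n - int (\<alpha> n), 0)}"
    unfolding D by (rule rows[OF mono a1 n1]) (use n1 in auto)
  have key: "(int k, int n - int k) \<in> set (D1_path n \<alpha>) \<longleftrightarrow> \<alpha> k = n - k" if k: "k \<in> {1..n}" for k
  proof
    assume "(int k, int n - int k) \<in> set (D1_path n \<alpha>)"
    then consider (fin) "(int k, int n - int k) = (int n - int (\<alpha> n), 0)"
      | (row) i t where "i \<in> {1..n}" "t \<le> gfun n \<alpha> i - \<alpha> i"
          "int k = int n - int (gfun n \<alpha> i) + int t" "int n - int k = int n - int i + 1"
      unfolding S by blast
    then show "\<alpha> k = n - k"
    proof cases
      case fin then show ?thesis using k by auto
    next
      case (row i t)
      then have ik: "i = k + 1" by linarith
      then have kn: "k < n" using row(1) by auto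
      have g: "gfun n \<alpha> i = \<alpha> k" using ik k by (simp add: gfun_def)
      have "\<alpha> k \<le> n - k" using bound k by auto
      then show ?thesis using row(3) g by linarith
    qed
  next
    assume e: "\<alpha> k = n - k"
    show "(int k, int n - int k) \<in> set (D1_path n \<alpha>)"
    proof (cases "k = n")
      case True then show ?thesis using e unfolding S by simp
    next
      case False
      then have kn: "k + 1 \<in> {1..n}" using k by auto
      have g: "gfun n \<alpha> (k+1) = \<alpha> k" using k by (simp add: gfun_def)
      have "(int k, int n - int k) \<in> {(int n - int (gfun n \<alpha> (k+1)) + int t, int n - int (k+1) + 1) | t. t \<le> gfun n \<alpha> (k+1) - \<alpha> (k+1)}"
        apply (rule CollectI, rule exI[of _ 0]) using g e k by auto
      then show ?thesis unfolding S using kn by blast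
    qed
  qed
  show ?thesis unfolding prime_components_def
    by (rule arg_cong[where f=card]) (use key in auto)
qed



lemma compl_iff:
  "z \<in> arr_complement A \<longleftrightarrow> (\<forall>i j. i \<noteq> j \<longrightarrow> z$i - z$j \<noteq> 0 \<and> z$i - z$j \<notin> A)"
proof
  assume z: "z \<in> arr_complement A"
  show "\<forall>i j. i \<noteq> j \<longrightarrow> z$i - z$j \<noteq> 0 \<and> z$i - z$j \<notin> A"
  proof (intro allI impI conjI)
    fix i j :: 'a assume ij: "i \<noteq> j"
    have h1: "{x. x $ i - x $ j = 0} \<in> arr_hyperplanes A" using ij unfolding arr_hyperplanes_def by blast
    then show "z$i - z$j \<noteq> 0" using z unfolding arr_complement_def by blast
    show "z$i - z$j \<notin> A"
    proof
      assume "z$i - z$j \<in> A"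
      then have "{x. x $ i - x $ j = z$i - z$j} \<in> arr_hyperplanes A" using ij unfolding arr_hyperplanes_def by blast
      then show False using z unfolding arr_complement_def by blast
    qed
  qed
next
  assume "\<forall>i j. i \<noteq> j \<longrightarrow> z$i - z$j \<noteq> 0 \<and> z$i - z$j \<notin> A"
  then show "z \<in> arr_complement A"
    unfolding arr_complement_def arr_hyperplanes_def by auto
qed

lemma sign_gt:
  fixes S :: "(real^'n) set"
  assumes "connected S" "x \<in> S" "y \<in> S" "\<forall>z\<in>S. z$i - z$j \<noteq> c" "x$i - x$j > c"
  shows "y$i - y$j > c"
proof (rule ccontr)
  assume "\<not> ?thesis"
  then have "inner (axis i 1 - axis j 1) y \<le> c" "c \<le> inner (axis i 1 - axis j 1) x"
    using assms(5) by (auto simp: inner_diff_left inner_axis')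
  from connected_ivt_hyperplane[OF assms(1) assms(3) assms(2) this]
  obtain z where "z \<in> S" "inner (axis i 1 - axis j 1) z = c" by blast
  then show False using assms(4) by (auto simp: inner_diff_left inner_axis')
qed

lemma sign_lt:
  fixes S :: "(real^'n) set"
  assumes "connected S" "x \<in> S" "y \<in> S" "\<forall>z\<in>S. z$i - z$j \<noteq> c" "x$i - x$j < c"
  shows "y$i - y$j < c"
proof (rule ccontr)
  assume "\<not> ?thesis"
  then have "inner (axis i 1 - axis j 1) x \<le> c" "c \<le> inner (axis i 1 - axis j 1) y"
    using assms(5) by (auto simp: inner_diff_left inner_axis')
  from connected_ivt_hyperplane[OF assms(1) assms(2) assms(3) this]
  obtain z where "z \<in> S" "inner (axis i 1 - axis j 1) z = c" by blast
  then show False using assms(4) by (auto simp: inner_diff_left inner_axis')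
qed

lemma ray_in:
  fixes W :: "(real^'n) set"
  assumes W: "subspace W" and b: "\<forall>t\<ge>0. infdist (x + t *\<^sub>R v) W \<le> r"
  shows "v \<in> W"
proof (rule ccontr)
  assume nv: "v \<notin> W"
  have cW: "closed W" using W by (rule closed_subspace)
  have neW: "W \<noteq> {}" using W subspace_0 by blast
  define d where "d = infdist v W"
  have d0: "d > 0" unfolding d_def by (rule infdist_pos_not_in_closed[OF cW neW nv])
  have r0: "r \<ge> 0" using b[rule_format, of 0] infdist_nonneg[of x W] by simp
  define t where "t = (r + norm x + 1) / d"
  have t0: "t > 0" using d0 r0 unfolding t_def by (simp add: add_nonneg_pos)
  obtain w0 where w0: "w0 \<in> W" "infdist (t *\<^sub>R v) W = dist (t *\<^sub>R v) w0"
    using infdist_attains_inf[OF cW neW] by blast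
  have "(1/t) *\<^sub>R w0 \<in> W" using W w0(1) by (simp add: subspace_scale)
  then have "d \<le> dist v ((1/t) *\<^sub>R w0)" unfolding d_def by (rule infdist_le)
  also have "dist v ((1/t) *\<^sub>R w0) = dist (t *\<^sub>R v) w0 / t"
  proof -
    have "t *\<^sub>R v - w0 = t *\<^sub>R (v - (1/t) *\<^sub>R w0)" using t0 by (simp add: algebra_simps)
    then have "norm (t *\<^sub>R v - w0) = t * norm (v - (1/t) *\<^sub>R w0)" using t0 by simp
    then show ?thesis using t0 by (simp add: dist_norm)
  qed
  finally have "t * d \<le> infdist (t *\<^sub>R v) W" using t0 w0(2) by (simp add: field_simps)
  also have "infdist (t *\<^sub>R v) W \<le> infdist (x + t *\<^sub>R v) W + dist (t *\<^sub>R v) (x + t *\<^sub>R v)"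
    by (rule infdist_triangle)
  also have "\<dots> \<le> r + norm x" using b[rule_format, of t] t0 by (simp add: dist_norm)
  finally have "t * d \<le> r + norm x" .
  moreover have "t * d = r + norm x + 1" using d0 unfolding t_def by simp
  ultimately show False by simp
qed



theorem theorem3p2:
  fixes A :: "real set" and \<Delta> :: "(real^'n) set"
    and x :: "real^'n" and \<pi> :: "nat \<Rightarrow> 'n"
  assumes "finite A" and "A \<noteq> {}" and "\<forall>a\<in>A. a > 0"
    and "\<Delta> \<in> arr_regions A"
    and "x \<in> \<Delta>"
    and "bij_betw \<pi> {1..CARD('n)} UNIV"
    and "\<forall>i\<in>{1..CARD('n)}. \<forall>j\<in>{1..CARD('n)}. i < j \<longrightarrow> x$(\<pi> i) > x$(\<pi> j)"
  shows "level \<Delta> = prime_components CARD('n)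
                      (D1_path CARD('n) (alpha_seq (Max A) CARD('n) \<pi> x))
         \<and> level \<Delta> = 1 + card {k \<in> {1..CARD('n) - 1}. x$(\<pi> k) - x$(\<pi> (k+1)) > Max A}"
proof -
  define n where "n = CARD('n)"
  define a1 where "a1 = Max A"
  note finA = assms(1) and neA = assms(2) and posA = assms(3) and xD = assms(5)
  have n1: "1 \<le> n" unfolding n_def by (simp add: Suc_leI)
  have a1A: "a1 \<in> A" unfolding a1_def using finA neA by simp
  have a1max: "\<And>a. a \<in> A \<Longrightarrow> a \<le> a1" unfolding a1_def using finA by simp
  have a1pos: "a1 > 0" using a1A posA by blast
  have bij: "bij_betw \<pi> {1..n} UNIV" using assms(6) unfolding n_def .
  have inj: "inj_on \<pi> {1..n}" using bij by (rule bij_betw_imp_inj_on)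
  have img: "\<pi> ` {1..n} = UNIV" using bij by (rule bij_betw_imp_surj_on)
  define \<sigma> where "\<sigma> = inv_into {1..n} \<pi>"
  have \<sigma>in: "\<And>j. \<sigma> j \<in> {1..n}" unfolding \<sigma>_def by (metis UNIV_I img inv_into_into)
  have \<pi>\<sigma>: "\<And>j. \<pi> (\<sigma> j) = j" unfolding \<sigma>_def by (metis UNIV_I img f_inv_into_f)
  have \<sigma>\<pi>: "\<And>i. i \<in> {1..n} \<Longrightarrow> \<sigma> (\<pi> i) = i" unfolding \<sigma>_def using inj by simp
  have xlt: "\<And>a b. a \<in> {1..n} \<Longrightarrow> b \<in> {1..n} \<Longrightarrow> a < b \<Longrightarrow> x$(\<pi> b) < x$(\<pi> a)"
    using assms(7) unfolding n_def by blast
  have xle: "\<And>a b. a \<in> {1..n} \<Longrightarrow> b \<in> {1..n} \<Longrightarrow> a \<le> b \<Longrightarrow> x$(\<pi> b) \<le> x$(\<pi> a)"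
    using xlt by (metis le_less order_refl)
  define S where "S = (arr_complement A :: (real^'n) set)"
  have DS: "\<Delta> \<in> components S" using assms(4) unfolding arr_regions_def S_def .
  have DsubS: "\<Delta> \<subseteq> S" using DS by (rule in_components_subset)
  have Dconn: "connected \<Delta>" using DS by (rule in_components_connected)
  have Dcc: "\<Delta> = connected_component_set S x"
    using DS xD by (metis components_iff connected_component_eq)
  have xS: "x \<in> S" using xD DsubS by blast
  define G where "G = {k \<in> {1..n - 1}. x$(\<pi> k) - x$(\<pi> (k+1)) > a1}"
  define K where "K = insert n G"
  have Gsub: "G \<subseteq> {1..<n}" unfolding G_def using n1 by auto
  have nG: "n \<notin> G" using Gsub by auto
  have finG: "finite G" using Gsub finite_subset by blast
  have cardK: "card K = 1 + card G" unfolding K_def using nG finG by simp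
  have Ksub: "K \<subseteq> {1..n}" unfolding K_def using Gsub n1 by auto
  define v :: "nat \<Rightarrow> real^'n" where "v k = (\<chi> j. if \<sigma> j \<le> k then 1 else 0)" for k
  have vc: "\<And>k i. i \<in> {1..n} \<Longrightarrow> v k $ \<pi> i = (if i \<le> k then 1 else 0)"
    unfolding v_def using \<sigma>\<pi> by simp
  have xcomp: "\<And>i j. i \<noteq> j \<Longrightarrow> x$i - x$j \<noteq> 0 \<and> x$i - x$j \<notin> A"
    using xS unfolding S_def compl_iff by blast
  have rayS: "x + s *\<^sub>R v k \<in> S" if kK: "k \<in> K" and s0: "s \<ge> 0" for k s
  proof -
    define y where "y = x + s *\<^sub>R v k"
    have yc: "y$(\<pi> a) = x$(\<pi> a) + s * (if a \<le> k then 1 else 0)" if "a \<in> {1..n}" for a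
      unfolding y_def using vc[OF that] by simp
    have claim: "y$(\<pi> a) - y$(\<pi> b) = x$(\<pi> a) - x$(\<pi> b) \<or> y$(\<pi> a) - y$(\<pi> b) > a1"
      if ab: "a \<in> {1..n}" "b \<in> {1..n}" "a < b" for a b
    proof (cases "a \<le> k \<and> k < b")
      case True
      then have kn: "k < n" using ab by auto
      then have kG: "k \<in> G" using kK unfolding K_def by auto
      then have gap: "x$(\<pi> k) - x$(\<pi> (k+1)) > a1" unfolding G_def by auto
      have k1: "k \<ge> 1" "k+1 \<le> b" using True ab by auto
      have "x$(\<pi> k) \<le> x$(\<pi> a)" using xle[of a k] True ab kn by auto
      moreover have "x$(\<pi> b) \<le> x$(\<pi> (k+1))" using xle[of "k+1" b] k1 ab kn by auto
      ultimately have "x$(\<pi> a) - x$(\<pi> b) > a1" using gap by linarith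
      then show ?thesis using yc[OF ab(1)] yc[OF ab(2)] True s0 by auto
    next
      case False
      then have "(a \<le> k) = (b \<le> k)" using ab by auto
      then show ?thesis using yc[OF ab(1)] yc[OF ab(2)] by auto
    qed
    have ok: "y$(\<pi> a) - y$(\<pi> b) \<noteq> 0 \<and> y$(\<pi> a) - y$(\<pi> b) \<notin> A \<and> y$(\<pi> a) - y$(\<pi> b) > 0"
      if ab: "a \<in> {1..n}" "b \<in> {1..n}" "a < b" for a b
    proof -
      have ne: "\<pi> a \<noteq> \<pi> b" using ab inj by (metis inj_on_eq_iff less_irrefl)
      have xp: "x$(\<pi> a) - x$(\<pi> b) > 0" using xlt[OF ab] by simp
      from claim[OF ab] show ?thesis
      proof
        assume "y$(\<pi> a) - y$(\<pi> b) = x$(\<pi> a) - x$(\<pi> b)"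
        then show ?thesis using xcomp[OF ne] xp by simp
      next
        assume g: "y$(\<pi> a) - y$(\<pi> b) > a1"
        then show ?thesis using a1max a1pos by force
      qed
    qed
    have "y \<in> S" unfolding S_def compl_iff
    proof (intro allI impI)
      fix i j :: 'n assume ij: "i \<noteq> j"
      have ab: "\<sigma> i \<noteq> \<sigma> j" using ij \<pi>\<sigma> by metis
      then consider "\<sigma> i < \<sigma> j" | "\<sigma> j < \<sigma> i" by linarith
      then show "y$i - y$j \<noteq> 0 \<and> y$i - y$j \<notin> A"
      proof cases
        case 1
        from ok[OF \<sigma>in \<sigma>in 1] show ?thesis unfolding \<pi>\<sigma> by simp
      next
        case 2
        from ok[OF \<sigma>in \<sigma>in 2] have "y$j - y$i > 0" unfolding \<pi>\<sigma> by simp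
        then show ?thesis using posA by force
      qed
    qed
    then show ?thesis unfolding y_def .
  qed
  have ray: "x + s *\<^sub>R v k \<in> \<Delta>" if kK: "k \<in> K" and s0: "s \<ge> 0" for k s
  proof -
    define T where "T = (\<lambda>t. x + t *\<^sub>R v k) ` {0..s}"
    have "connected T" unfolding T_def
      by (rule connected_continuous_image) (auto intro!: continuous_intros)
    moreover have "x \<in> T" unfolding T_def using s0 by (auto intro!: image_eqI[of _ _ 0])
    moreover have "T \<subseteq> S" unfolding T_def using rayS[OF kK] by auto
    ultimately have "T \<subseteq> \<Delta>" unfolding Dcc by (meson connected_component_maximal)
    moreover have "x + s *\<^sub>R v k \<in> T" unfolding T_def using s0 by auto
    ultimately show ?thesis by blast
  qed
  have indep: "independent (v ` K)"
  proof
    assume "dependent (v ` K)"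
    then obtain t u w0 where t: "finite t" "t \<subseteq> v ` K" "(\<Sum>w\<in>t. u w *\<^sub>R w) = 0"
      and w0: "w0 \<in> t" "u w0 \<noteq> 0"
      unfolding dependent_explicit by blast
    obtain k0 where k0: "k0 \<in> K" "w0 = v k0" using w0 t by blast
    have k0n: "k0 \<in> {1..n}" using k0 Ksub by auto
    define \<phi> :: "real^'n \<Rightarrow> real" where "\<phi> z = z$(\<pi> k0) - (if k0 < n then z$(\<pi> (k0+1)) else 0)" for z
    have \<phi>v: "\<phi> (v m) = (if m = k0 then 1 else 0)" if m: "m \<in> {1..n}" for m
    proof (cases "k0 < n")
      case True
      have "k0 + 1 \<in> {1..n}" using True k0n by auto
      then show ?thesis using True vc[OF k0n, of m] vc[of "k0+1" m] m unfolding \<phi>_def by auto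
    next
      case False
      then have "k0 = n" using k0n by auto
      then show ?thesis using False vc[OF k0n, of m] m unfolding \<phi>_def by auto
    qed
    have lin: "\<phi> (\<Sum>w\<in>t. u w *\<^sub>R w) = (\<Sum>w\<in>t. u w * \<phi> w)"
      unfolding \<phi>_def by (simp add: sum_subtractf right_diff_distrib)
    have "(\<Sum>w\<in>t. u w * \<phi> w) = u w0 * \<phi> w0 + (\<Sum>w\<in>t - {w0}. u w * \<phi> w)"
      using t(1) w0(1) by (simp add: sum.remove)
    also have "(\<Sum>w\<in>t - {w0}. u w * \<phi> w) = 0"
    proof (rule sum.neutral, rule ballI)
      fix w assume w: "w \<in> t - {w0}"
      then obtain m where m: "m \<in> K" "w = v m" using t(2) by blast
      have "m \<noteq> k0" using m w k0 by auto
      then show "u w * \<phi> w = 0" using \<phi>v[of m] m Ksub by auto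
    qed
    also have "\<phi> w0 = 1" using \<phi>v[OF k0n] k0 by simp
    finally have "(\<Sum>w\<in>t. u w * \<phi> w) = u w0" by simp
    moreover have "\<phi> (\<Sum>w\<in>t. u w *\<^sub>R w) = 0" unfolding t(3) \<phi>_def by simp
    ultimately show False using lin w0(2) by simp
  qed
  have injv: "inj_on v K"
  proof (rule inj_onI)
    fix k1 k2 assume k: "k1 \<in> K" "k2 \<in> K" "v k1 = v k2"
    show "k1 = k2"
    proof (rule ccontr)
      assume "k1 \<noteq> k2"
      then consider "k1 < k2" | "k2 < k1" by linarith
      then show False
      proof cases
        case 1
        have "v k1 $ \<pi> k2 = v k2 $ \<pi> k2" using k by simp
        then show False using vc[of k2 k1] vc[of k2 k2] 1 k Ksub by auto
      next
        case 2
        have "v k1 $ \<pi> k1 = v k2 $ \<pi> k1" using k by simp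
        then show False using vc[of k1 k1] vc[of k1 k2] 2 k Ksub by auto
      qed
    qed
  qed
  define r0 where "r0 = real n * real n * a1 + 1"
  have finK: "finite K" using Ksub finite_subset by blast
  have upper: "infdist y (span (v ` K)) \<le> r0" if yD: "y \<in> \<Delta>" for y
  proof -
    have zcomp: "\<And>z i j. z \<in> \<Delta> \<Longrightarrow> i \<noteq> j \<Longrightarrow> z$i - z$j \<noteq> 0 \<and> z$i - z$j \<notin> A"
    proof -
      fix z :: "real^'n" and i j :: 'n assume "z \<in> \<Delta>" "i \<noteq> j"
      moreover have "z \<in> arr_complement A" using \<open>z \<in> \<Delta>\<close> DsubS unfolding S_def by blast
      ultimately show "z$i - z$j \<noteq> 0 \<and> z$i - z$j \<notin> A" unfolding compl_iff by blast
    qed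
    define d where "d k = y$(\<pi> k) - y$(\<pi> (k+1))" for k
    have dpos: "d k > 0" if "k \<in> {1..<n}" for k
    proof -
      have ab: "k \<in> {1..n}" "k+1 \<in> {1..n}" "k < k+1" using that by auto
      have ne: "\<pi> k \<noteq> \<pi> (k+1)" using ab inj by (metis inj_on_eq_iff less_irrefl)
      have "y$(\<pi> k) - y$(\<pi> (k+1)) > 0"
        by (rule sign_gt[OF Dconn xD yD]) (use zcomp[OF _ ne] xlt[OF ab] in auto)
      then show ?thesis unfolding d_def .
    qed
    have dsmall: "d k < a1" if "k \<in> {1..<n}" "k \<notin> G" for k
    proof -
      have ab: "k \<in> {1..n}" "k+1 \<in> {1..n}" "k < k+1" using that by auto
      have ne: "\<pi> k \<noteq> \<pi> (k+1)" using ab inj by (metis inj_on_eq_iff less_irrefl)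
      have "\<not> x$(\<pi> k) - x$(\<pi> (k+1)) > a1" using that unfolding G_def by auto
      moreover have "x$(\<pi> k) - x$(\<pi> (k+1)) \<noteq> a1" using xcomp[OF ne] a1A by auto
      ultimately have "x$(\<pi> k) - x$(\<pi> (k+1)) < a1" by linarith
      then have "y$(\<pi> k) - y$(\<pi> (k+1)) < a1"
        by (rule sign_lt[OF Dconn xD yD, rotated]) (use zcomp[OF _ ne] a1A in blast)
      then show ?thesis unfolding d_def .
    qed
    define c where "c k = (if k = n then y$(\<pi> n) else d k)" for k
    define w where "w = (\<Sum>k\<in>K. c k *\<^sub>R v k)"
    have wW: "w \<in> span (v ` K)" unfolding w_def
      by (intro span_sum span_scale span_base) auto
    have wc: "w$(\<pi> i) = y$(\<pi> n) + (\<Sum>k\<in>G \<inter> {i..<n}. d k)" if i: "i \<in> {1..n}" for i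
    proof -
      have "w$(\<pi> i) = (\<Sum>k\<in>K. c k * (v k $ \<pi> i))" unfolding w_def by simp
      also have "\<dots> = (\<Sum>k\<in>K. if k \<in> {i..} then c k else 0)"
        using vc[OF i] by (intro sum.cong) auto
      also have "\<dots> = sum c (K \<inter> {i..})" by (rule sum.inter_restrict[OF finK, symmetric])
      also have "K \<inter> {i..} = insert n (G \<inter> {i..<n})" unfolding K_def using i Gsub by auto
      also have "sum c (insert n (G \<inter> {i..<n})) = c n + sum c (G \<inter> {i..<n})"
        using finG nG by simp
      also have "sum c (G \<inter> {i..<n}) = (\<Sum>k\<in>G \<inter> {i..<n}. d k)"
        unfolding c_def by (intro sum.cong) auto
      finally show ?thesis unfolding c_def by simp
    qed
    have tele: "y$(\<pi> i) = y$(\<pi> n) + (\<Sum>k\<in>{i..<n}. d k)" if i: "i \<in> {1..n}" for i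
    proof -
      have "(\<Sum>k = i..<n. (- y$(\<pi> (Suc k))) - (- y$(\<pi> k))) = (- y$(\<pi> n)) - (- y$(\<pi> i))"
        by (rule sum_Suc_diff') (use i in auto)
      moreover have "(\<Sum>k = i..<n. (- y$(\<pi> (Suc k))) - (- y$(\<pi> k))) = (\<Sum>k\<in>{i..<n}. d k)"
        unfolding d_def by (intro sum.cong) auto
      ultimately show ?thesis by simp
    qed
    have comp: "\<bar>(y - w)$j\<bar> \<le> real n * a1" for j
    proof -
      define i where "i = \<sigma> j"
      have i: "i \<in> {1..n}" unfolding i_def by (rule \<sigma>in)
      have j: "j = \<pi> i" unfolding i_def by (simp add: \<pi>\<sigma>)
      have "(y - w)$j = (\<Sum>k\<in>{i..<n}. d k) - (\<Sum>k\<in>G \<inter> {i..<n}. d k)"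
        unfolding j using tele[OF i] wc[OF i] by simp
      also have "\<dots> = (\<Sum>k\<in>{i..<n} - G \<inter> {i..<n}. d k)" by (rule sum_diff[symmetric]) auto
      also have "{i..<n} - G \<inter> {i..<n} = {i..<n} - G" by auto
      finally have e: "(y - w)$j = (\<Sum>k\<in>{i..<n} - G. d k)" .
      have mem: "\<And>k. k \<in> {i..<n} - G \<Longrightarrow> k \<in> {1..<n} \<and> k \<notin> G" using i by auto
      have "0 \<le> (\<Sum>k\<in>{i..<n} - G. d k)"
        by (rule sum_nonneg) (use dpos mem in fastforce)
      moreover have "(\<Sum>k\<in>{i..<n} - G. d k) \<le> real (card ({i..<n} - G)) * a1"
        by (rule sum_bounded_above) (use dsmall mem in fastforce)
      moreover have "card ({i..<n} - G) \<le> n"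
        using card_mono[of "{i..<n}" "{i..<n} - G"] by auto
      then have "real (card ({i..<n} - G)) * a1 \<le> real n * a1" using a1pos by simp
      ultimately show ?thesis unfolding e by linarith
    qed
    have "infdist y (span (v ` K)) \<le> dist y w" by (rule infdist_le[OF wW])
    also have "\<dots> = norm (y - w)" by (simp add: dist_norm)
    also have "\<dots> \<le> (\<Sum>j\<in>UNIV. \<bar>(y - w)$j\<bar>)" by (rule norm_le_l1_cart)
    also have "\<dots> \<le> (\<Sum>j\<in>(UNIV::'n set). real n * a1)" by (rule sum_mono) (rule comp)
    also have "\<dots> = real n * real n * a1" by (simp add: n_def)
    also have "\<dots> \<le> r0" unfolding r0_def by simp
    finally show ?thesis .
  qed
  have lev: "level \<Delta> = card K"
  proof -
    have "level \<Delta> = (LEAST l. \<exists>W r. subspace W \<and> dim W = l \<and> r > 0 \<and> (\<forall>x\<in>\<Delta>. infdist x W \<le> r))"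
      unfolding level_def ..
    also have "\<dots> = card K"
    proof (rule Least_equality)
      show "\<exists>W r. subspace W \<and> dim W = card K \<and> r > 0 \<and> (\<forall>x\<in>\<Delta>. infdist x W \<le> r)"
        apply (rule exI[of _ "span (v ` K)"], rule exI[of _ r0])
        using upper dim_span_eq_card_independent[OF indep] card_image[OF injv] a1pos
        by (auto simp: r0_def add_nonneg_pos)
    next
      fix l assume "\<exists>W r. subspace W \<and> dim W = l \<and> r > 0 \<and> (\<forall>x\<in>\<Delta>. infdist x W \<le> r)"
      then obtain W r where W: "subspace W" "dim W = l" "\<forall>x\<in>\<Delta>. infdist x W \<le> r" by blast
      have "v ` K \<subseteq> W"
      proof
        fix z assume "z \<in> v ` K"
        then obtain k where k: "k \<in> K" "z = v k" by blast
        have "\<forall>t\<ge>0. infdist (x + t *\<^sub>R v k) W \<le> r" using W(3) ray[OF k(1)] by blast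
        then show "z \<in> W" using ray_in[OF W(1)] k(2) by blast
      qed
      from independent_card_le_dim[OF this indep]
      show "card K \<le> l" using card_image[OF injv] W(2) by simp
    qed
    finally show ?thesis .
  qed
  have pc: "prime_components n (D1_path n (alpha_seq a1 n \<pi> x)) = card K"
  proof -
    define \<alpha> where "\<alpha> = alpha_seq a1 n \<pi> x"
    have \<alpha>def: "\<alpha> i = card {j \<in> {1..n}. x$(\<pi> i) - x$(\<pi> j) > a1}" for i
      unfolding \<alpha>_def alpha_seq_def ..
    have sub: "{j \<in> {1..n}. x$(\<pi> i) - x$(\<pi> j) > a1} \<subseteq> {i+1..n}" if i: "i \<in> {1..n}" for i
    proof
      fix j assume j: "j \<in> {j \<in> {1..n}. x$(\<pi> i) - x$(\<pi> j) > a1}"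
      have "\<not> j \<le> i"
      proof
        assume "j \<le> i"
        then have "x$(\<pi> i) \<le> x$(\<pi> j)" using xle[of j i] i j by auto
        then show False using j a1pos by auto
      qed
      then show "j \<in> {i+1..n}" using j by auto
    qed
    have bound: "\<forall>i\<in>{1..n}. \<alpha> i \<le> n - i"
    proof
      fix i assume i: "i \<in> {1..n}"
      have "\<alpha> i \<le> card {i+1..n}" unfolding \<alpha>def by (rule card_mono[OF _ sub[OF i]]) simp
      then show "\<alpha> i \<le> n - i" by simp
    qed
    have mono: "\<forall>i. 1 \<le> i \<longrightarrow> i < n \<longrightarrow> \<alpha> (i+1) \<le> \<alpha> i"
    proof (intro allI impI)
      fix i assume i: "1 \<le> i" "i < n"
      have "x$(\<pi> (i+1)) \<le> x$(\<pi> i)" using xle[of i "i+1"] i by auto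
      then have "{j \<in> {1..n}. x$(\<pi> (i+1)) - x$(\<pi> j) > a1} \<subseteq> {j \<in> {1..n}. x$(\<pi> i) - x$(\<pi> j) > a1}"
        by auto
      then show "\<alpha> (i+1) \<le> \<alpha> i" unfolding \<alpha>def by (rule card_mono[rotated]) simp
    qed
    have eqK: "{k\<in>{1..n}. \<alpha> k = n - k} = K"
    proof (rule set_eqI)
      fix k
      show "k \<in> {k\<in>{1..n}. \<alpha> k = n - k} \<longleftrightarrow> k \<in> K"
      proof (cases "k \<in> {1..n}")
        case False then show ?thesis using Ksub by auto
      next
        case k: True
        show ?thesis
        proof (cases "k = n")
          case True
          have "\<alpha> n \<le> n - n" using bound n1 by (meson atLeastAtMost_iff order_refl)
          then show ?thesis using True k unfolding K_def by auto
        next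
          case False
          then have kn: "k < n" using k by auto
          show ?thesis
          proof (cases "k \<in> G")
            case True
            then have gap: "x$(\<pi> k) - x$(\<pi> (k+1)) > a1" unfolding G_def by auto
            have "{j \<in> {1..n}. x$(\<pi> k) - x$(\<pi> j) > a1} = {k+1..n}"
            proof
              show "{j \<in> {1..n}. x$(\<pi> k) - x$(\<pi> j) > a1} \<subseteq> {k+1..n}" by (rule sub[OF k])
              show "{k+1..n} \<subseteq> {j \<in> {1..n}. x$(\<pi> k) - x$(\<pi> j) > a1}"
              proof
                fix j assume j: "j \<in> {k+1..n}"
                then have "x$(\<pi> j) \<le> x$(\<pi> (k+1))" using xle[of "k+1" j] kn by auto
                then show "j \<in> {j \<in> {1..n}. x$(\<pi> k) - x$(\<pi> j) > a1}" using gap j by auto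
              qed
            qed
            then have "\<alpha> k = n - k" unfolding \<alpha>def by simp
            then show ?thesis using True k unfolding K_def by auto
          next
            case False
            then have gap: "\<not> x$(\<pi> k) - x$(\<pi> (k+1)) > a1" unfolding G_def using k kn by auto
            have "{j \<in> {1..n}. x$(\<pi> k) - x$(\<pi> j) > a1} \<subseteq> {k+2..n}"
            proof
              fix j assume j: "j \<in> {j \<in> {1..n}. x$(\<pi> k) - x$(\<pi> j) > a1}"
              then have j1: "j \<in> {k+1..n}" using sub[OF k] by blast
              have "j \<noteq> k + 1" using j gap by auto
              then show "j \<in> {k+2..n}" using j1 by simp
            qed
            then have "\<alpha> k \<le> card {k+2..n}" unfolding \<alpha>def by (rule card_mono[rotated]) simp
            then have "\<alpha> k \<noteq> n - k" using kn by simp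
            then show ?thesis using False \<open>k \<noteq> n\<close> unfolding K_def by auto
          qed
        qed
      qed
    qed
    have "prime_components n (D1_path n \<alpha>) = card {k\<in>{1..n}. \<alpha> k = n - k}"
      by (rule D1_count[OF n1 bound mono])
    then show ?thesis using eqK unfolding \<alpha>_def by simp
  qed
  show ?thesis using lev pc cardK unfolding n_def[symmetric] a1_def[symmetric] G_def[symmetric] by simp
qed


end
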